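(* Let $n\ge 2$ be an integer that is not a perfect square, and let $a,b$ be positive integers with $a^2-nb^2=-1$. Put $u=a+b\sqrt n$, and let $H_j/K_j$ be the convergents of the simple continued fraction expansion of $u^2$, with $H_{-1}=1$. Then $$\mathcal L\left(\frac1{u^2}\right)=\sum_{k=0}^{\infty}\left[\mathcal L\left(\frac{1}{nb^2(2H_{2k-1})^2}\right)+\mathcal L\left(\frac{1}{(2H_{2k+1}-H_{2k})^2}\right)\right].$$
   Context: $\mathcal L$ is the Rogers dilogarithm: for real $z\le1$, $\mathcal L(z)=\mathrm{Li}_2(z)+\tfrac12\log|z|\log(1-z)$, where $\mathrm{Li}_2(z)=\sum_{m\ge1}z^m/m^2$. If $v=[c_0,c_1,c_2,\dots]$ is the simple continued fraction expansion of $v$ ($c_0=\lfloor v\rfloor$, $c_i\ge1$ integers), the convergent numerators are defined by $H_{-2}=0,H_{-1}=1$, $H_i=c_iH_{i-1}+H_{i-2}$ for $i\ge0$, and denominators by $K_{-2}=1,K_{-1}=0$, $K_i=c_iK_{i-1}+K_{i-2}$, so that $[c_0,\dots,c_i]=H_i/K_i$. *)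

theory Defs
  imports Complex_Main
begin

definition Li2 :: "real \<Rightarrow> real" where
  "Li2 z = (\<Sum>m. z ^ (Suc m) / (real (Suc m))\<^sup>2)"

definition rogers_L :: "real \<Rightarrow> real" where
  "rogers_L z = Li2 z + 1/2 * ln \<bar>z\<bar> * ln (1 - z)"

primrec cf_rem :: "real \<Rightarrow> nat \<Rightarrow> real" where
  "cf_rem v 0 = v"
| "cf_rem v (Suc i) = 1 / (cf_rem v i - of_int \<lfloor>cf_rem v i\<rfloor>)"

definition cf_coeff :: "real \<Rightarrow> nat \<Rightarrow> int" where
  "cf_coeff v i = \<lfloor>cf_rem v i\<rfloor>"

text \<open>Shifted numerators: cf_num_sh v j = H_{j-2}; H_{-2}=0, H_{-1}=1,
  H_i = c_i H_{i-1} + H_{i-2}.\<close>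
fun cf_num_sh :: "real \<Rightarrow> nat \<Rightarrow> int" where
  "cf_num_sh v 0 = 0"
| "cf_num_sh v (Suc 0) = 1"
| "cf_num_sh v (Suc (Suc i)) = cf_coeff v i * cf_num_sh v (Suc i) + cf_num_sh v i"

definition cf_H :: "real \<Rightarrow> int \<Rightarrow> int" where
  "cf_H v j = cf_num_sh v (nat (j + 2))"

end

theory Submission
  imports Defs "HOL-Real_Asymp.Real_Asymp"
begin

lemma summable_geo_div:
  fixes x :: real assumes "\<bar>x\<bar> < 1"
  shows "summable (\<lambda>n. x^n / real (Suc n))"
proof (rule summable_comparison_test[of _ "\<lambda>n. \<bar>x\<bar>^n"])
  show "\<exists>N. \<forall>n\<ge>N. norm (x ^ n / real (Suc n)) \<le> \<bar>x\<bar> ^ n"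
    by (auto simp: abs_mult power_abs divide_le_eq mult_le_cancel_left1 intro!: exI[of _ 0])
  show "summable (\<lambda>n. \<bar>x\<bar> ^ n)" using assms by (simp add: summable_geometric)
qed

lemma Li2_deriv:
  fixes x :: real assumes "\<bar>x\<bar> < 1"
  shows "DERIV Li2 x :> (\<Sum>n. x^n / real (Suc n))"
proof -
  define f where "f n = 1 / (real (Suc n))\<^sup>2" for n
  have eq: "Li2 = (\<lambda>x. \<Sum>n. f n * x^(Suc n))"
    by (auto simp: Li2_def f_def fun_eq_iff)
  have eq2: "f n * real (Suc n) * y^n = y^n / real (Suc n)" for n y
    by (simp add: f_def power2_eq_square)
  have "DERIV (\<lambda>x. \<Sum>n. f n * x^(Suc n)) x :> (\<Sum>n. f n * real (Suc n) * x^n)"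
    apply (rule DERIV_power_series'[where R=1])
    subgoal for y unfolding eq2 by (rule summable_geo_div) auto
    using assms by auto
  then show ?thesis unfolding eq eq2 .
qed

lemma ln_series_aux:
  fixes x :: real assumes "0 < x" "x < 1"
  shows "(\<Sum>n. x^n / real (Suc n)) = - ln (1 - x) / x"
proof -
  have "ln (1 - x) = (\<Sum>n. (-1)^n * (1 / real (n + 1)) * ((1 - x) - 1)^(Suc n))"
    using assms by (intro ln_series) auto
  also have "\<dots> = (\<Sum>n. (-x) * (x^n / real (Suc n)))"
    by (rule suminf_cong) (simp add: power_mult_distrib[symmetric] flip: power_minus)
  also have "\<dots> = (-x) * (\<Sum>n. x^n / real (Suc n))"
    using summable_geo_div[of x] assms by (intro suminf_mult) auto
  finally show ?thesis using assms by (simp add: field_simps)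
qed

definition Ld :: "real \<Rightarrow> real" where
  "Ld z = - (ln (1 - z) / z + ln z / (1 - z)) / 2"

lemma L_deriv:
  fixes x :: real assumes "0 < x" "x < 1"
  shows "DERIV rogers_L x :> Ld x"
proof -
  have d1: "DERIV Li2 x :> - ln (1 - x) / x"
    using Li2_deriv[of x] ln_series_aux[of x] assms by simp
  have "DERIV (\<lambda>z. Li2 z + 1/2 * ln z * ln (1 - z)) x :> Ld x"
    using assms unfolding Ld_def
    by (auto intro!: derivative_eq_intros d1 simp: field_simps)
  then show ?thesis
    by (rule has_field_derivative_transform_within_open[where S="{0<..}"])
       (use assms in \<open>auto simp: rogers_L_def\<close>)
qed

lemma L_isCont: "0 < x \<Longrightarrow> x < (1::real) \<Longrightarrow> isCont rogers_L x"
  using L_deriv DERIV_isCont by blast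

lemma L_zero: "rogers_L 0 = 0"
  by (simp add: rogers_L_def Li2_def)

lemma L_at0: "(rogers_L \<longlongrightarrow> 0) (at_right 0)"
proof -
  have "isCont Li2 0" using Li2_deriv[of 0] DERIV_isCont by auto
  then have a: "(Li2 \<longlongrightarrow> 0) (at_right 0)"
  proof -
    have "Li2 0 = 0" by (simp add: Li2_def)
    then have "(Li2 \<longlongrightarrow> 0) (at 0)" using \<open>isCont Li2 0\<close> by (simp add: isCont_def)
    then show ?thesis by (rule tendsto_mono[OF at_le, rotated]) simp
  qed
  have b: "((\<lambda>z::real. ln z * ln (1 - z)) \<longlongrightarrow> 0) (at_right 0)"
    by real_asymp
  have "((\<lambda>z. Li2 z + 1/2 * (ln z * ln (1 - z))) \<longlongrightarrow> 0 + 1/2 * 0) (at_right 0)"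
    by (intro tendsto_intros a b)
  moreover have "\<forall>\<^sub>F z in at_right 0. Li2 z + 1/2 * (ln z * ln (1 - z)) = rogers_L z"
    by (rule eventually_mono[OF eventually_at_right_less]) (simp add: rogers_L_def)
  ultimately show ?thesis using tendsto_cong by force
qed

lemma L_cont_on: assumes "0 < b" "b < 1" shows "continuous_on {0..b} rogers_L"
  unfolding continuous_on_eq_continuous_within
proof
  fix x assume x: "x \<in> {0..b}"
  show "continuous (at x within {0..b}) rogers_L"
  proof (cases "x = 0")
    case True
    then show ?thesis using L_at0 assms
      by (simp add: continuous_within at_within_Icc_at_right L_zero)
  next
    case False
    then show ?thesis using x assms L_isCont[of x]
      by (auto intro: continuous_at_imp_continuous_at_within)
  qed
qed

lemma five_alg:
  fixes x y :: real assumes x: "0 < x" "x < 1" and y: "0 < y" "y < 1"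
  shows "Ld x - Ld (x*y) * y - Ld (x*(1-y)/(1-x*y)) * ((1-y)/(1-x*y)^2)
         - Ld (y*(1-x)/(1-x*y)) * (y*(y-1)/(1-x*y)^2) = 0"
proof -
  have xy: "x*y < 1" "0 < x*y" using x y mult_strict_mono[of x 1 y 1] by auto
  define P where "P = 1 - x*y"
  define X where "X = 1 - x"
  define Y where "Y = 1 - y"
  have p: "0 < P" "0 < X" "0 < Y" using xy x y by (auto simp: P_def X_def Y_def)
  define A where "A = ln x"
  define B where "B = ln y"
  define C where "C = ln X"
  define D where "D = ln Y"
  define E where "E = ln P"
  have nz: "x \<noteq> 0" "y \<noteq> 0" "X \<noteq> 0" "Y \<noteq> 0" "P \<noteq> 0"
    using x y p by auto
  have e1: "1 - x*Y/P = X/P" using p by (simp add: field_simps P_def X_def Y_def)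
  have e2: "1 - y*X/P = Y/P" using p by (simp add: field_simps P_def X_def Y_def)
  have e3: "y - 1 = - Y" by (simp add: Y_def)
  have l1: "ln (X/P) = C - E" using p by (simp add: ln_div C_def E_def)
  have l2: "ln (Y/P) = D - E" using p by (simp add: ln_div D_def E_def)
  have l3: "ln (x*Y/P) = A + D - E" using x p by (simp add: ln_div ln_mult A_def D_def E_def)
  have l4: "ln (y*X/P) = B + C - E" using y p by (simp add: ln_div ln_mult B_def C_def E_def)
  have l5: "ln (x*y) = A + B" using x y by (simp add: ln_mult A_def B_def)
  have l6: "ln (1 - x*y) = E" by (simp add: E_def P_def)
  have t1: "Ld x = - (C/x + A/X) / 2" by (simp add: Ld_def A_def C_def X_def)
  have t2: "Ld (x*y) * y = - (E/x + y*(A+B)/P) / 2"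
    unfolding Ld_def l5 l6 P_def[symmetric] using nz by (simp add: field_simps E_def)
  have t3: "Ld (x*Y/P) * (Y/P^2) = - ((C-E)/(x*P) + (A+D-E)*Y/(X*P)) / 2"
    unfolding Ld_def e1 l1 l3 using nz by (simp add: field_simps power2_eq_square)
  have t4: "Ld (y*X/P) * (y*(-Y)/P^2) = ((D-E)*Y/(X*P) + y*(B+C-E)/P) / 2"
    unfolding Ld_def e2 l2 l4 using nz by (simp add: field_simps power2_eq_square)
  have fin: "- (C/x + A/X) / 2 + (E/x + y*(A+B)/P) / 2
     + ((C-E)/(x*P) + (A+D-E)*Y/(X*P)) / 2
     - ((D-E)*Y/(X*P) + y*(B+C-E)/P) / 2 = 0"
    using nz by (simp add: field_simps) (simp add: algebra_simps P_def X_def Y_def)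
  show ?thesis unfolding P_def[symmetric] X_def[symmetric] Y_def[symmetric] e3 t1 t2 t3 t4
    using fin by linarith
qed

lemma qbound:
  fixes t y :: real assumes "0 \<le> t" "t < 1" "0 \<le> y" "y < 1"
  shows "0 \<le> t*(1-y)/(1-t*y)" "t*(1-y)/(1-t*y) \<le> t" "0 < 1 - t*y"
proof -
  have ty: "t*y < 1" using assms mult_strict_mono[of t 1 y 1] by (cases "t = 0") auto
  then show "0 < 1 - t*y" by simp
  show "0 \<le> t*(1-y)/(1-t*y)" using assms ty by simp
  have "t*(1-y) \<le> t*(1-t*y)" using assms by (intro mult_left_mono) (auto intro: mult_left_le_one_le)
  then show "t*(1-y)/(1-t*y) \<le> t" using ty by (simp add: divide_le_eq)
qed

lemma qpos:
  fixes t y :: real assumes "0 < t" "t < 1" "0 < y" "y < 1"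
  shows "0 < t*(1-y)/(1-t*y)" "t*(1-y)/(1-t*y) < 1"
proof -
  have "0 < 1 - t*y" using qbound[of t y] assms by auto
  then show "0 < t*(1-y)/(1-t*y)" using assms by simp
  have "t*(1-y) < 1 - t*y" using assms by (simp add: algebra_simps)
  then show "t*(1-y)/(1-t*y) < 1" using \<open>0 < 1 - t*y\<close> by (simp add: divide_less_eq)
qed

lemma five_term:
  fixes x y :: real assumes x: "0 < x" "x < 1" and y: "0 < y" "y < 1"
  shows "rogers_L x + rogers_L y = rogers_L (x*y) + rogers_L (x*(1-y)/(1-x*y))
           + rogers_L (y*(1-x)/(1-x*y))"
proof -
  define G where "G t = rogers_L t + rogers_L y - rogers_L (t*y) - rogers_L (t*(1-y)/(1-t*y))
           - rogers_L (y*(1-t)/(1-t*y))" for t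
  define b where "b = max x y"
  have b: "0 < b" "b < 1" using x y by (auto simp: b_def)
  have Lc: "continuous_on {0..b} rogers_L" using L_cont_on b by auto
  have comp: "continuous_on {0..x} (\<lambda>t. rogers_L (f t))"
    if "continuous_on {0..x} f" "\<And>t. t \<in> {0..x} \<Longrightarrow> f t \<in> {0..b}" for f
    by (rule continuous_on_compose2[OF Lc that(1)]) (use that(2) in auto)
  have den: "t \<in> {0..x} \<Longrightarrow> 1 - t*y \<noteq> 0" for t using qbound[of t y] x y by auto
  have cont: "continuous_on {0..x} G"
    unfolding G_def
  proof (intro continuous_intros comp)
    fix t assume t: "t \<in> {0..x}"
    then have t1: "0 \<le> t" "t < 1" using x by auto
    show "t \<in> {0..b}" using t by (auto simp: b_def)
    have "t*y \<le> y" using mult_left_le_one_le[of y t] t1 y by auto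
    moreover have "y \<le> b" by (simp add: b_def)
    ultimately show "t*y \<in> {0..b}" using t1 y by (metis atLeastAtMost_iff order_trans less_imp_le mult_nonneg_nonneg)
    show "t*(1-y)/(1-t*y) \<in> {0..b}" using qbound[of t y] t1 y t by (auto simp: b_def)
    have "y*(1-t)/(1-y*t) \<in> {0..y}" using qbound[of y t] t1 y by auto
    then show "y*(1-t)/(1-t*y) \<in> {0..b}" by (auto simp: b_def mult.commute)
  qed (use den in auto)
  have der: "DERIV G t :> 0" if t: "0 < t" "t < x" for t
  proof -
    have t1: "0 < t" "t < 1" using t x by auto
    have ty: "0 < t*y" "t*y < 1" using t1 y mult_strict_mono[of t 1 y 1] by auto
    have P: "0 < 1 - t*y" using ty by simp
    have q: "0 < t*(1-y)/(1-t*y)" "t*(1-y)/(1-t*y) < 1" using qpos[OF t1 y] by auto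
    have r0: "0 < y*(1-t)/(1-y*t)" "y*(1-t)/(1-y*t) < 1" using qpos[OF y t1] by auto
    have r: "0 < y*(1-t)/(1-t*y)" "y*(1-t)/(1-t*y) < 1" using r0 by (auto simp: mult.commute)
    have dq: "DERIV (\<lambda>t. t*(1-y)/(1-t*y)) t :> (1-y)/(1-t*y)^2"
      using P by (auto intro!: derivative_eq_intros simp: field_simps power2_eq_square)
    have dr: "DERIV (\<lambda>t. y*(1-t)/(1-t*y)) t :> y*(y-1)/(1-t*y)^2"
      using P by (auto intro!: derivative_eq_intros simp: field_simps power2_eq_square)
    have dp: "DERIV (\<lambda>t. t*y) t :> y" by (auto intro!: derivative_eq_intros)
    have "DERIV G t :> Ld t + 0 - Ld (t*y) * y - Ld (t*(1-y)/(1-t*y)) * ((1-y)/(1-t*y)^2)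
         - Ld (y*(1-t)/(1-t*y)) * (y*(y-1)/(1-t*y)^2)"
      unfolding G_def
      by (intro DERIV_diff DERIV_add L_deriv t1 DERIV_const
            DERIV_chain2[OF L_deriv dp] DERIV_chain2[OF L_deriv dq] DERIV_chain2[OF L_deriv dr]
            ty q r)
    then show ?thesis using five_alg[OF t1 y] by simp
  qed
  have "G x = G 0" by (rule DERIV_isconst_end[OF x(1) cont der]) auto
  then show ?thesis by (simp add: G_def L_zero)
qed

lemma L_refl:
  fixes z w :: real assumes z: "0 < z" "z < 1" and w: "0 < w" "w < 1"
  shows "rogers_L z + rogers_L (1 - z) = rogers_L w + rogers_L (1 - w)"
proof -
  define H where "H t = rogers_L t + rogers_L (1 - t)" for t
  have dH: "DERIV H t :> 0" if "0 < t" "t < 1" for t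
  proof -
    have d1: "DERIV (\<lambda>t. 1 - t) t :> -1" by (auto intro!: derivative_eq_intros)
    have "DERIV H t :> Ld t + Ld (1 - t) * (-1)"
      unfolding H_def using that by (intro DERIV_add L_deriv DERIV_chain2[OF L_deriv d1]) auto
    moreover have "Ld (1 - t) = Ld t" by (simp add: Ld_def add.commute)
    ultimately show ?thesis by simp
  qed
  have main: "H a = H c" if "0 < a" "a < c" "c < 1" for a c
  proof -
    have "continuous_on {a..c} H"
    proof (intro continuous_at_imp_continuous_on ballI)
      fix x assume "x \<in> {a..c}"
      then show "isCont H x" using that by (intro DERIV_isCont[OF dH]) auto
    qed
    moreover have "\<And>x. a < x \<Longrightarrow> x < c \<Longrightarrow> DERIV H x :> 0" using that dH by auto
    ultimately have "H c = H a" by (rule DERIV_isconst_end[OF that(2)])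
    then show ?thesis by simp
  qed
  have "H z = H w"
  proof (cases z w rule: linorder_cases)
    case less then show ?thesis using main[of z w] z w by simp
  next
    case equal then show ?thesis by simp
  next
    case greater then show ?thesis using main[of w z] z w by simp
  qed
  then show ?thesis by (simp add: H_def)
qed

definition Fs :: "real \<Rightarrow> nat \<Rightarrow> real" where
  "Fs s j = (s^j - 1/s^j) / (s - 1/s)"

locale sctx =
  fixes s :: real assumes s: "1 < s"
begin

lemma D_pos: "0 < s - 1/s"
proof -
  have "1/s < 1" using s by simp
  then show ?thesis using s by linarith
qed

lemma Fs_mul: "Fs s j * (s - 1/s) = s^j - 1/s^j"
  using D_pos by (simp add: Fs_def)

lemma Fs_exp:
  "Fs s j = (s^j - 1/s^j) / (s - 1/s)"
  "Fs s (j+1) = (s*s^j - 1/(s*s^j)) / (s - 1/s)"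
  "Fs s (j+2) = (s*s*s^j - 1/(s*s*s^j)) / (s - 1/s)"
  by (simp_all add: Fs_def)

lemma Fs_I2: "s * Fs s (j+1) - Fs s j = s^(j+1)"
proof -
  define p where "p = s^j"
  have p: "0 < p" using s by (simp add: p_def)
  define D where "D = s - 1/s"
  have D: "D \<noteq> 0" using D_pos by (simp add: D_def)
  have s0: "s \<noteq> 0" using s by simp
  have "s * (s*p - 1/(s*p)) - (p - 1/p) = s*p*D"
    unfolding D_def using p s0 by (simp add: field_simps)
  then have "s * ((s*p - 1/(s*p))/D) - (p - 1/p)/D = s*p"
    using D by (simp add: diff_divide_distrib[symmetric])
  moreover have "Fs s j = (p - 1/p)/D" "Fs s (j+1) = (s*p - 1/(s*p))/D"
    "Fs s (j+2) = (s*s*p - 1/(s*s*p))/D" "s^(j+1) = s*p"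
    by (simp_all add: Fs_def p_def D_def)
  ultimately show ?thesis by (simp add: p_def)
qed


lemma Fs_I3: "Fs s (j+1) - s * Fs s j = 1/s^j"
proof -
  define p where "p = s^j"
  have p: "0 < p" using s by (simp add: p_def)
  define D where "D = s - 1/s"
  have D: "D \<noteq> 0" using D_pos by (simp add: D_def)
  have s0: "s \<noteq> 0" using s by simp
  have "(s*p - 1/(s*p)) - s * (p - 1/p) = D / p"
    unfolding D_def using p s0 by (simp add: field_simps)
  then have "(s*p - 1/(s*p))/D - s * ((p - 1/p)/D) = 1/p"
    using D by (simp add: diff_divide_distrib[symmetric])
  moreover have "Fs s j = (p - 1/p)/D" "Fs s (j+1) = (s*p - 1/(s*p))/D"
    by (simp_all add: Fs_def p_def D_def)
  ultimately show ?thesis by (simp add: p_def)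
qed

lemma div_aux: "D \<noteq> 0 \<Longrightarrow> a*b = c^2 - D*D \<Longrightarrow> (a/D)*(b/D) = (c/D)^2 - (1::real)"
  by (simp add: field_simps power2_eq_square)

lemma Fs_I1: "Fs s j * Fs s (j+2) = (Fs s (j+1))^2 - 1"
proof -
  define p where "p = s^j"
  have p: "0 < p" using s by (simp add: p_def)
  define D where "D = s - 1/s"
  have D: "D \<noteq> 0" using D_pos by (simp add: D_def)
  have s0: "s \<noteq> 0" using s by simp
  have "(p - 1/p) * (s*s*p - 1/(s*s*p)) = (s*p - 1/(s*p))^2 - D*D"
    unfolding D_def using p s0 by (simp add: field_simps power2_eq_square)
  then have "((p - 1/p)/D) * ((s*s*p - 1/(s*s*p))/D) = ((s*p - 1/(s*p))/D)^2 - 1"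
    by (rule div_aux[OF D])
  moreover have "Fs s j = (p - 1/p)/D" "Fs s (j+1) = (s*p - 1/(s*p))/D"
    "Fs s (j+2) = (s*s*p - 1/(s*s*p))/D"
    by (simp_all add: Fs_def p_def D_def)
  ultimately show ?thesis by (simp add: p_def)
qed

lemma Fs_0: "Fs s 0 = 0" by (simp add: Fs_def)
lemma Fs_1: "Fs s 1 = 1" using D_pos by (simp add: Fs_def)

lemma Fs_ge1: "1 \<le> Fs s (j+1)"
proof (induction j)
  case 0 then show ?case using Fs_1 by simp
next
  case (Suc j)
  have "Fs s (Suc j + 1) = s * Fs s (j+1) + 1/s^(j+1)" using Fs_I3[of "j+1"] by simp
  moreover have "Fs s (j+1) \<le> s * Fs s (j+1)" using Suc s by simp
  moreover have "0 < 1/s^(j+1)" using s by simp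
  ultimately show ?case using Suc by linarith
qed

lemma Fs_gt1: "1 < Fs s (j+2)"
proof -
  have "Fs s (j+2) = s * Fs s (j+1) + 1/s^(j+1)" using Fs_I3[of "j+1"] by simp
  moreover have "Fs s (j+1) \<le> s * Fs s (j+1)" using Fs_ge1[of j] s by simp
  moreover have "0 < 1/s^(j+1)" using s by simp
  ultimately show ?thesis using Fs_ge1[of j] by linarith
qed


definition "al j = Fs s j / (s * Fs s (j+1))"
definition "ga j = 1 / (s^j * Fs s (j+1))"
definition "gg j = rogers_L (al j) - rogers_L (ga j)"

lemma tele: "rogers_L (1 / (Fs s (k+2))^2) = gg (k+2) - gg (k+1)"
proof -
  define a where "a = Fs s (k+1)"
  define b where "b = Fs s (k+2)"
  define c where "c = Fs s (k+3)"
  define P where "P = s^(k+1)"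
  have a1: "1 \<le> a" using Fs_ge1[of k] by (simp add: a_def)
  have b1: "1 < b" using Fs_gt1[of k] by (simp add: b_def)
  have c1: "1 < c" using Fs_gt1[of "k+1"] by (simp add: c_def numeral_3_eq_3)
  have P1: "1 \<le> P" unfolding P_def by (rule one_le_power) (use s in simp)
  have s0: "0 < s" using s by simp
  have I1: "a*c = b^2 - 1" using Fs_I1[of "k+1"] by (simp add: a_def b_def c_def numeral_3_eq_3)
  have I2a: "s*b - a = s*P" using Fs_I2[of "k+1"] by (simp add: a_def b_def P_def)
  have I2b: "s*c - b = s*s*P" using Fs_I2[of "k+2"] by (simp add: c_def b_def P_def numeral_3_eq_3)
  have I3: "b - s*a = 1/P" using Fs_I3[of "k+1"] by (simp add: a_def b_def P_def)
  define x where "x = b/(s*c)"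
  define y where "y = 1 - 1/b^2"
  have y': "1 - 1/b^2 = a*c/b^2" using I1 b1 by (simp add: field_simps)
  have x0: "0 < x" "x < 1"
  proof -
    show "0 < x" using b1 c1 s0 by (simp add: x_def)
    have "b < s*c" using I2b s0 P1 by (smt (verit) mult_pos_pos)
    then show "x < 1" using c1 s0 by (simp add: x_def)
  qed
  have y0: "0 < y" "y < 1"
  proof -
    have "1/b^2 < 1" using b1 by simp
    then show "0 < y" by (simp add: y_def)
    show "y < 1" using b1 by (simp add: y_def)
  qed
  have E1: "x*y = a/(s*b)"
    unfolding y_def y' x_def using b1 c1 s0 by (simp add: field_simps power2_eq_square)
  have E0: "1 - x*y = P/b"
  proof -
    have "1 - a/(s*b) = (s*b - a)/(s*b)" using b1 s0 by (simp add: field_simps)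
    also have "\<dots> = P/b" unfolding I2a using b1 s0 by simp
    finally show ?thesis using E1 by simp
  qed
  have X1: "1 - x = s*P/c"
  proof -
    have "1 - b/(s*c) = (s*c - b)/(s*c)" using c1 s0 by (simp add: field_simps)
    also have "\<dots> = s*P/c" unfolding I2b using c1 s0 by simp
    finally show ?thesis by (simp add: x_def)
  qed
  have E2: "x*(1-y)/(1-x*y) = 1/(s^(k+2) * c)"
  proof -
    have "x*(1-y) = 1/(s*c*b)" unfolding x_def y_def using b1 c1 s0 by (simp add: field_simps power2_eq_square)
    then have "x*(1-y)/(1-x*y) = 1/(s*c*b) / (P/b)" using E0 by simp
    also have "\<dots> = 1/(s*P*c)" using b1 c1 s0 P1 by (simp add: field_simps)
    finally show ?thesis by (simp add: P_def)
  qed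
  have E3: "y*(1-x)/(1-x*y) = 1 - 1/(P*b)"
  proof -
    have "y*(1-x)/(1-x*y) = (a*c/b^2) * (s*P/c) / (P/b)" unfolding E0 X1 unfolding y_def y' by simp
    also have "\<dots> = s*a/b" using b1 c1 s0 P1 by (simp add: field_simps power2_eq_square)
    also have "\<dots> = 1 - 1/(P*b)"
    proof -
      have "P*b - 1 = P*s*a" using I3 P1 by (simp add: field_simps)
      have "1 - 1/(P*b) = (P*b - 1)/(P*b)" using b1 P1 by (simp add: field_simps)
      also have "\<dots> = (P*(s*a))/(P*b)" using \<open>P*b - 1 = P*s*a\<close> by (simp add: mult.assoc)
      also have "\<dots> = s*a/b" using P1 by simp
      finally show ?thesis by simp
    qed
    finally show ?thesis .
  qed
  have r0: "0 < 1/(P*b)" "1/(P*b) < 1"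
  proof -
    show "0 < 1/(P*b)" using b1 P1 by simp
    have "1 < P*b" using b1 P1 by (smt (verit) mult_less_cancel_left1)
    then show "1/(P*b) < 1" by simp
  qed
  have F5: "rogers_L x + rogers_L y = rogers_L (a/(s*b)) + rogers_L (1/(s^(k+2) * c))
          + rogers_L (1 - 1/(P*b))"
    using five_term[OF x0 y0] unfolding E2 E3 unfolding E1 .
  have R: "rogers_L y + rogers_L (1/b^2) = rogers_L (1 - 1/(P*b)) + rogers_L (1/(P*b))"
    using L_refl[OF y0, of "1 - 1/(P*b)"] r0 by (simp add: y_def)
  have gk2: "gg (k+2) = rogers_L x - rogers_L (1/(s^(k+2) * c))"
    by (simp add: gg_def al_def ga_def x_def b_def c_def numeral_3_eq_3)
  have gk1: "gg (k+1) = rogers_L (a/(s*b)) - rogers_L (1/(P*b))"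
    by (simp add: gg_def al_def ga_def a_def b_def P_def)
  show ?thesis unfolding gk1 gk2 b_def[symmetric] using F5 R by linarith
qed


end

context sctx begin
lemma ga_pos: "0 < ga j" "ga j \<le> (1/s)^j"
proof -
  have F1: "1 \<le> Fs s (j+1)" by (rule Fs_ge1)
  have p: "0 < s^j" using s by simp
  show "0 < ga j" unfolding ga_def using F1 p by simp
  have "s^j * 1 \<le> s^j * Fs s (j+1)" using F1 p by (intro mult_left_mono) auto
  then have "1/(s^j * Fs s (j+1)) \<le> 1/(s^j)" using p F1
    by (intro divide_left_mono) auto
  then show "ga j \<le> (1/s)^j" by (simp add: ga_def power_one_over)
qed

lemma w_lim: "(\<lambda>j. (1/s)^j) \<longlonglongrightarrow> 0"
  by (rule LIMSEQ_power_zero) (use s in simp)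

lemma ga_lim: "ga \<longlonglongrightarrow> 0"
proof (rule tendsto_sandwich[where f="\<lambda>_. 0" and h="\<lambda>j. (1/s)^j"])
  show "\<forall>\<^sub>F j in sequentially. 0 \<le> ga j"
    by (intro always_eventually allI) (simp add: ga_pos less_imp_le)
  show "\<forall>\<^sub>F j in sequentially. ga j \<le> (1/s)^j"
    by (intro always_eventually allI) (simp add: ga_pos)
qed (auto intro: w_lim)

lemma al_eq: "al j = (1 - ((1/s)^j)^2) / (s^2 - ((1/s)^j)^2)"
proof -
  define p where "p = s^j"
  have p: "1 \<le> p" unfolding p_def by (rule one_le_power) (use s in simp)
  have s0: "0 < s" using s by simp
  define D where "D = s - 1/s"
  have D: "0 < D" using D_pos by (simp add: D_def)
  have w: "(1/s)^j = 1/p" by (simp add: p_def power_one_over)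
  have "s*1 \<le> s*p" using s p by (intro mult_left_mono) auto
  then have sp: "1 < s*p" using s by linarith
  have "1/(s*p) < 1" using sp by simp
  then have Y: "0 < s*p - 1/(s*p)" using sp by linarith
  have "al j = ((p - 1/p)/D) / (s * ((s*p - 1/(s*p))/D))"
    by (simp add: al_def Fs_def p_def D_def)
  also have "\<dots> = (p - 1/p) / (s * (s*p - 1/(s*p)))" using D by simp
  also have "\<dots> = (1 - (1/p)^2) / (s^2 - (1/p)^2)"
  proof -
    have d2: "0 < s^2 - (1/p)^2"
    proof -
      have "1/p \<le> 1" using p by simp
      then have "(1/p)^2 \<le> 1" using p by (simp add: power_le_one)
      moreover have "1 < s^2" using s by (simp add: one_less_power)
      ultimately show ?thesis by simp
    qed
    have d1: "0 < s * (s*p - 1/(s*p))" using Y s0 by simp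
    have p0: "p \<noteq> 0" using p by simp
    have n1: "p - 1/p = (p^2-1)/p" using p0 by (simp add: field_simps power2_eq_square)
    have n2: "s*(s*p - 1/(s*p)) = (s^2*p^2 - 1)/p" using p0 s0 by (simp add: field_simps power2_eq_square)
    have n3: "1 - (1/p)^2 = (p^2-1)/p^2" using p0 by (simp add: field_simps power2_eq_square)
    have n4: "s^2 - (1/p)^2 = (s^2*p^2-1)/p^2" using p0 by (simp add: field_simps power2_eq_square)
    show ?thesis unfolding n1 n2 n3 n4 using p0 by simp
  qed
  finally show ?thesis by (simp add: w)
qed

lemma al_lim: "al \<longlonglongrightarrow> 1/s^2"
proof -
  have "(\<lambda>j. (1 - ((1/s)^j)^2) / (s^2 - ((1/s)^j)^2)) \<longlonglongrightarrow> (1 - 0^2)/(s^2 - 0^2)"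
    using s by (intro tendsto_intros w_lim) auto
  moreover have "al = (\<lambda>j. (1 - ((1/s)^j)^2) / (s^2 - ((1/s)^j)^2))" by (rule ext) (rule al_eq)
  ultimately show ?thesis by simp
qed

lemma Fsum: "(\<lambda>k. rogers_L (1 / (Fs s (k+2))^2)) sums rogers_L (1/s^2)"
proof -
  have s2: "0 < 1/s^2" "1/s^2 < (1::real)" using s by (auto simp: one_less_power)
  have h1: "(\<lambda>k. rogers_L (al (Suc k))) \<longlonglongrightarrow> rogers_L (1/s^2)"
    by (rule isCont_tendsto_compose[OF L_isCont[OF s2] LIMSEQ_Suc[OF al_lim]])
  have gf: "filterlim (\<lambda>k. ga (Suc k)) (at_right 0) sequentially"
    by (rule tendsto_imp_filterlim_at_right[OF LIMSEQ_Suc[OF ga_lim]]) (simp add: ga_pos)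
  have h2: "(\<lambda>k. rogers_L (ga (Suc k))) \<longlonglongrightarrow> 0"
    by (rule filterlim_compose[OF L_at0 gf])
  have "(\<lambda>k. gg (Suc k)) \<longlonglongrightarrow> rogers_L (1/s^2) - 0"
    unfolding gg_def by (intro tendsto_diff h1 h2)
  then have "(\<lambda>k. gg (Suc (Suc k)) - gg (Suc k)) sums (rogers_L (1/s^2) - 0 - gg (Suc 0))"
    by (rule telescope_sums)
  moreover have "gg (Suc 0) = 0" using Fs_1 by (simp add: gg_def al_def ga_def)
  moreover have "gg (Suc (Suc k)) - gg (Suc k) = rogers_L (1 / (Fs s (k+2))^2)" for k
    using tele[of k] by simp
  ultimately show ?thesis by simp
qed

lemma Fsum2: "(\<lambda>k. rogers_L (1 / (Fs s (2*k+2))^2) + rogers_L (1 / (Fs s (2*k+3))^2))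
    sums rogers_L (1/s^2)"
proof -
  have "(\<lambda>n. sum (\<lambda>k. rogers_L (1 / (Fs s (k+2))^2)) {n * 2 ..< n * 2 + 2}) sums rogers_L (1/s^2)"
    by (rule sums_group[OF Fsum]) simp
  moreover have "sum (\<lambda>k. rogers_L (1 / (Fs s (k+2))^2)) {n * 2 ..< n * 2 + 2}
     = rogers_L (1 / (Fs s (2*n+2))^2) + rogers_L (1 / (Fs s (2*n+3))^2)" for n
    by (simp add: numeral_3_eq_3 mult.commute)
  ultimately show ?thesis by simp
qed

end

context sctx begin
lemma Fs_rec: "Fs s (j+2) = (s + 1/s) * Fs s (j+1) - Fs s j"
proof -
  have a: "Fs s (j+2) = s * Fs s (j+1) + 1/s^(j+1)" using Fs_I3[of "j+1"] by simp
  have b: "Fs s j = s * Fs s (j+1) - s^(j+1)" using Fs_I2[of j] by simp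
  have c: "Fs s (j+1) * (s - 1/s) = s^(j+1) - 1/s^(j+1)" by (rule Fs_mul)
  have "(s + 1/s) * Fs s (j+1) - Fs s j = Fs s (j+1) / s + s^(j+1)"
    unfolding b using s by (simp add: algebra_simps)
  also have "\<dots> = s * Fs s (j+1) + 1/s^(j+1)"
    using c s by (simp add: algebra_simps)
  finally show ?thesis using a by simp
qed
end

declare cf_rem.simps(2)[simp del] cf_num_sh.simps(3)[simp del]

locale cfctx =
  fixes v :: real and T :: int
  assumes v1: "1 < v" and vT: "v + 1/v = of_int T" and T6: "6 \<le> T"
begin

lemma v_bounds: "of_int T - 1 < v" "v < of_int T"
proof -
  have "0 < 1/v" "1/v < 1" using v1 by auto
  then show "of_int T - 1 < v" "v < of_int T" using vT by linarith+
qed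

lemma fl0: "\<lfloor>v\<rfloor> = T - 1"
  using v_bounds by (intro floor_unique) auto

lemma fl1: "\<lfloor>v/(v-1)\<rfloor> = 1"
proof -
  have "(6::real) \<le> of_int T" using T6 by simp
  then have v5: "5 < v" using v_bounds by linarith
  have "1 \<le> v/(v-1)" using v1 by (simp add: le_divide_eq)
  moreover have "v/(v-1) < 2" using v5 by (simp add: divide_less_eq)
  ultimately show ?thesis by (intro floor_unique) auto
qed

lemma fl2: "\<lfloor>v - 1\<rfloor> = T - 2"
  using v_bounds by (intro floor_unique) auto

lemma r0: "1 / (1 - 1/v) = v/(v-1)"
  using v1 by (simp add: field_simps)

lemma r1: "1 / (v - of_int (T - 1)) = v/(v-1)"
proof -
  have e: "v - of_int (T - 1) = 1 - 1/v" using vT by simp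
  show ?thesis unfolding e by (rule r0)
qed

lemma r2: "1 / (v/(v-1) - of_int 1) = v - 1"
  using v1 by (simp add: field_simps)

lemma r3: "1 / ((v - 1) - of_int (T - 2)) = v/(v-1)"
proof -
  have e: "(v - 1) - of_int (T - 2) = 1 - 1/v" using vT by simp
  show ?thesis unfolding e by (rule r0)
qed

lemma cf_rem_per: "cf_rem v (2*i+1) = v/(v-1) \<and> cf_rem v (2*i+2) = v - 1"
proof (induction i)
  case 0
  have a: "cf_rem v 1 = v/(v-1)"
  proof -
    have "cf_rem v 1 = 1/(cf_rem v 0 - of_int \<lfloor>cf_rem v 0\<rfloor>)"
      using cf_rem.simps(2)[of v 0] by simp
    also have "\<dots> = v/(v-1)" unfolding cf_rem.simps(1) fl0 by (rule r1)
    finally show ?thesis .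
  qed
  have "cf_rem v 2 = 1/(cf_rem v 1 - of_int \<lfloor>cf_rem v 1\<rfloor>)"
    using cf_rem.simps(2)[of v 1] by (simp only: numeral_2_eq_2 One_nat_def)
  also have "\<dots> = v - 1" unfolding a fl1 by (rule r2)
  finally have b: "cf_rem v 2 = v - 1" .
  have e: "2*0+1 = (1::nat)" "2*0+2 = (2::nat)" by simp_all
  show ?case unfolding e using a b by (rule conjI)
next
  case (Suc i)
  have e1: "2*Suc i+1 = Suc (2*i+2)" by simp
  have e2: "2*Suc i+2 = Suc (2*Suc i+1)" by simp
  have a: "cf_rem v (2*Suc i+1) = v/(v-1)"
    unfolding e1 cf_rem.simps(2)[of v "2*i+2"] Suc.IH[THEN conjunct2] fl2 by (rule r3)
  have "cf_rem v (2*Suc i+2) = v - 1"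
    unfolding e2 cf_rem.simps(2)[of v "2*Suc i+1"] a fl1 by (rule r2)
  then show ?case using a by (rule conjI[rotated])
qed

lemma coeff0: "cf_coeff v 0 = T - 1"
  by (simp add: cf_coeff_def fl0)
lemma coeff_odd: "cf_coeff v (2*i+1) = 1"
  unfolding cf_coeff_def cf_rem_per[of i, THEN conjunct1] by (rule fl1)
lemma coeff_even: "cf_coeff v (2*i+2) = T - 2"
  unfolding cf_coeff_def cf_rem_per[of i, THEN conjunct2] by (rule fl2)

definition "PP k = cf_num_sh v (2*k+1)"

lemma sh_rec: "cf_num_sh v (j+2) = cf_coeff v j * cf_num_sh v (j+1) + cf_num_sh v j"
  using cf_num_sh.simps(3)[of v j] by (simp only: Suc_eq_plus1 add.assoc one_add_one)

lemma sh_even: "cf_num_sh v (2*k+2) = PP (k+1) - PP k"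
proof -
  have "cf_num_sh v (2*k+1+2) = cf_coeff v (2*k+1) * cf_num_sh v (2*k+1+1) + cf_num_sh v (2*k+1)"
    by (rule sh_rec)
  moreover have "2*k+1+2 = 2*(k+1)+1" "2*k+1+1 = 2*k+2" by simp_all
  ultimately show ?thesis using coeff_odd[of k] by (simp add: PP_def)
qed

lemma PP0: "PP 0 = 1" by (simp add: PP_def)
lemma PP1: "PP 1 = T"
proof -
  have a: "cf_num_sh v 2 = T - 1" using coeff0 sh_rec[of 0] by (simp add: numeral_2_eq_2)
  have "cf_num_sh v 3 = T" using a coeff_odd[of 0] sh_rec[of 1] by (simp add: numeral_3_eq_3 numeral_2_eq_2)
  then show ?thesis by (simp add: PP_def numeral_3_eq_3)
qed

lemma PP_rec: "PP (k+2) = T * PP (k+1) - PP k"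
proof -
  have e1: "cf_num_sh v (2*k+3+2) = cf_coeff v (2*k+3) * cf_num_sh v (2*k+3+1) + cf_num_sh v (2*k+3)"
    by (rule sh_rec)
  have e2: "cf_num_sh v (2*k+2+2) = cf_coeff v (2*k+2) * cf_num_sh v (2*k+2+1) + cf_num_sh v (2*k+2)"
    by (rule sh_rec)
  have e: "2*k+3 = 2*(k+1)+1" by simp
  have c3: "cf_coeff v (2*k+3) = 1" unfolding e by (rule coeff_odd)
  have c2: "cf_coeff v (2*k+2) = T - 2" by (rule coeff_even)
  have n: "2*k+3+2 = 2*(k+2)+1" "2*k+3+1 = 2*k+2+2" "2*k+2+1 = 2*(k+1)+1" "2*k+3 = 2*(k+1)+1" by simp_all
  have "PP (k+2) = cf_num_sh v (2*k+2+2) + PP (k+1)" using e1 c3 unfolding n PP_def by simp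
  also have "\<dots> = (T - 2) * PP (k+1) + (PP (k+1) - PP k) + PP (k+1)"
    using e2 c2 sh_even[of k] unfolding n PP_def by simp
  finally show ?thesis by (simp add: algebra_simps)
qed

end

theorem theorem2:
  fixes n a b :: nat
  assumes "n \<ge> 2"
    and "\<not> (\<exists>m::nat. m\<^sup>2 = n)"
    and "a > 0" and "b > 0"
    and "int a ^ 2 - int n * int b ^ 2 = -1"
  shows "(\<lambda>k::nat.
            rogers_L (1 / (real n * real b ^ 2 *
                        (2 * real_of_int (cf_H ((real a + real b * sqrt (real n))\<^sup>2) (2 * int k - 1)))\<^sup>2))
          + rogers_L (1 / (2 * real_of_int (cf_H ((real a + real b * sqrt (real n))\<^sup>2) (2 * int k + 1))
                          - real_of_int (cf_H ((real a + real b * sqrt (real n))\<^sup>2) (2 * int k)))\<^sup>2))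
         sums rogers_L (1 / (real a + real b * sqrt (real n))\<^sup>2)"
proof -
  define r where "r = sqrt (real n)"
  define u where "u = real a + real b * r"
  define v where "v = u^2"
  define T where "T = 4 * int n * (int b)^2 - 2"
  have r2: "r^2 = real n" by (simp add: r_def)
  have r0: "0 < r" using assms(1) by (simp add: r_def)
  have H: "(real a)^2 - real n * (real b)^2 = -1"
  proof -
    have "real_of_int (int a ^ 2 - int n * int b ^ 2) = real_of_int (-1)" using assms(5) by simp
    then show ?thesis by simp
  qed
  have a1: "1 \<le> real a" using assms(3) by simp
  have b1: "1 \<le> real b" using assms(4) by simp
  have u1: "1 < u" unfolding u_def using a1 b1 r0 by (smt (verit) mult_pos_pos)
  have uinv: "1/u = real b * r - real a"
  proof -
    have "u * (real b * r - real a) = real b ^ 2 * r^2 - (real a)^2"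
      unfolding u_def by (simp add: algebra_simps power2_eq_square)
    also have "\<dots> = 1" using H r2 by (simp add: algebra_simps)
    finally show ?thesis using u1 by (simp add: field_simps)
  qed
  define c where "c = u + 1/u"
  have c_eq: "c = 2 * real b * r" unfolding c_def uinv unfolding u_def by simp
  have c2: "c^2 = real_of_int T + 2"
    unfolding c_eq T_def using r2 by (simp add: power2_eq_square algebra_simps)
  have cnb: "c^2 = 4 * real n * (real b)^2"
    unfolding c_eq using r2 by (simp add: power2_eq_square algebra_simps)
  have vT: "v + 1/v = of_int T"
  proof -
    have "v + 1/v = c^2 - 2" unfolding v_def c_def using u1 by (simp add: power2_eq_square field_simps)
    then show ?thesis using c2 by simp
  qed
  have v1: "1 < v" unfolding v_def using u1 by (simp add: one_less_power)
  have T6: "6 \<le> T"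
  proof -
    have "2 \<le> int n" "1 \<le> (int b)^2" using assms(1,4) by (auto simp: one_le_power)
    then have "8 \<le> 4 * int n * (int b)^2"
      by (smt (verit) mult_le_cancel_left1 mult_right_mono)
    then show ?thesis by (simp add: T_def)
  qed
  interpret C: cfctx v T using v1 vT T6 by unfold_locales
  interpret S: sctx u using u1 by unfold_locales
  define P where "P k = real_of_int (C.PP k)" for k
  have P0: "P 0 = 1" by (simp add: P_def C.PP0)
  have P1: "P 1 = of_int T" using C.PP1 by (simp add: P_def)
  have Prec: "P (k+2) = of_int T * P (k+1) - P k" for k
  proof -
    have "real_of_int (C.PP (k+2)) = real_of_int (T * C.PP (k+1) - C.PP k)" by (simp only: C.PP_rec)
    then show ?thesis unfolding P_def by simp
  qed
  have Fs1: "Fs u 1 = 1" by (rule S.Fs_1)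
  have Fs0: "Fs u 0 = 0" by (rule S.Fs_0)
  have Frec: "Fs u (j+2) = c * Fs u (j+1) - Fs u j" for j unfolding c_def by (rule S.Fs_rec)
  have key: "Fs u (2*k+2) = c * P k \<and> Fs u (2*k+3) = P k + P (k+1)" for k
  proof (induction k)
    case 0
    have f2: "Fs u 2 = c" using Frec[of 0] Fs0 Fs1 by (simp add: numeral_2_eq_2)
    have "Fs u 3 = c * c - 1" using Frec[of 1] f2 Fs1 by (simp add: numeral_3_eq_3 numeral_2_eq_2)
    then have "Fs u 3 = of_int T + 1" using c2 by (simp add: power2_eq_square)
    then show ?case using f2 P0 P1 by (simp add: numeral_2_eq_2 numeral_3_eq_3)
  next
    case (Suc k)
    have e1: "2 * Suc k + 2 = (2*k+2) + 2" "2*k+2+1 = 2*k+3" by simp_all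
    have e2: "2 * Suc k + 3 = (2*k+3) + 2" "2*k+3+1 = 2 * Suc k + 2" by simp_all
    have IH1: "Fs u (2*k+2) = c * P k" and IH2: "Fs u (2*k+3) = P k + P (k+1)" using Suc.IH by auto
    have A: "Fs u (2 * Suc k + 2) = c * P (Suc k)"
    proof -
      have "Fs u (2 * Suc k + 2) = c * Fs u (2*k+3) - Fs u (2*k+2)"
        unfolding e1(1) using Frec[of "2*k+2"] unfolding e1(2) .
      then show ?thesis unfolding IH1 IH2 by (simp add: algebra_simps)
    qed
    have "Fs u (2 * Suc k + 3) = c * Fs u (2 * Suc k + 2) - Fs u (2*k+3)"
      unfolding e2(1) using Frec[of "2*k+3"] unfolding e2(2) .
    also have "\<dots> = c * (c * P (Suc k)) - (P k + P (k+1))" unfolding A IH2 ..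
    also have "\<dots> = c^2 * P (Suc k) - (P k + P (k+1))" by (simp add: power2_eq_square)
    also have "\<dots> = (of_int T + 2) * P (k+1) - P k - P (k+1)" unfolding c2 by simp
    also have "\<dots> = P (Suc k) + P (Suc k + 1)"
      using Prec[of k] by (simp add: algebra_simps)
    finally show ?case using A by simp
  qed
  have H1: "cf_H v (2 * int k - 1) = C.PP k" for k
  proof -
    have "nat (2 * int k - 1 + 2) = 2*k+1" by simp
    then show ?thesis by (simp add: cf_H_def C.PP_def)
  qed
  have H2: "cf_H v (2 * int k + 1) = C.PP (k+1)" for k
  proof -
    have "nat (2 * int k + 1 + 2) = 2*(k+1)+1" by simp
    then show ?thesis by (simp add: cf_H_def C.PP_def)
  qed
  have H3: "cf_H v (2 * int k) = C.PP (k+1) - C.PP k" for k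
  proof -
    have "nat (2 * int k + 2) = 2*k+2" by simp
    then show ?thesis using C.sh_even[of k] by (simp add: cf_H_def)
  qed
  have t1: "real n * real b ^ 2 * (2 * real_of_int (cf_H v (2 * int k - 1)))\<^sup>2 = (Fs u (2*k+2))^2" for k
    using key[of k] cnb unfolding H1 P_def by (simp add: power_mult_distrib algebra_simps)
  have t2: "2 * real_of_int (cf_H v (2 * int k + 1)) - real_of_int (cf_H v (2 * int k)) = Fs u (2*k+3)" for k
    using key[of k] unfolding H2 H3 P_def by simp
  show ?thesis
    using S.Fsum2 unfolding r_def[symmetric] u_def[symmetric] v_def[symmetric] t1 t2 .
qed

end
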